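(* In $\mathrm{TSym}$, for every planar tree $t$ of positive degree, $$\Delta_+(M_t)=\sum_{i\in\mathrm{GD}(t)}M_{{}^it}\otimes M_{t^i}.$$
   Context: A planar tree has linearly ordered children at each node, each node being a leaf or having $\ge2$ children (internal node); $\deg t$ = number of leaves minus one, $\mathrm{ideg}(t)$ = number of internal nodes, leaves numbered left to right. For $0\le i\le\deg t$, with $P$ the path from the root to leaf $i+1$: ${}^it$ is obtained by deleting, at each internal node on $P$, the children strictly to the right of the child on $P$ (with their subtrees), then contracting nodes with exactly one child; $t^i$ likewise with the children strictly to the left. The splitting is allowable if $\mathrm{ideg}({}^it)+\mathrm{ideg}(t^i)=\mathrm{ideg}(t)$. $\mathrm{TSym}$ has basis $\{F_t\}$ over planar trees and coproduct $\Delta(F_t)=\sum F_{{}^it}\otimes F_{t^i}$ over $0\le i\le\deg t$ with allowable splitting; $\Delta_+(x)=\Delta(x)-x\otimes1-1\otimes x$ with $1$ the one-leaf tree. $s/r$ identifies the root of $s$ with the leftmost leaf of $r$; $\mathrm{GD}(t)=\{i\in\{1,\dots,\deg t-1\}: t=s/r \text{ for some } s,r,\ \deg s=i\}$. Planar Tamari order: if an internal node $x$ has children $c_1,\dots,c_{a-1},y$ ($a\ge2$) with $y$ internal having children $d_1,\dots,d_{b+1}$ ($b\ge1$), the left rotation at $x$ replaces the subtree at $x$ by a node with children $z,d_2,\dots,d_{b+1}$, where $z$ is a new node with children $c_1,\dots,c_{a-1},d_1$; $\le_{PT}$ is the reflexive–transitive closure of "$t$ is a left rotation of $s$". The monomial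 basis is defined by $F_s=\sum_{t\ge_{PT}s}M_t$. *)

theory Defs
  imports Main
begin

datatype ptree = Leaf | Node "ptree list"

fun valid :: "ptree \<Rightarrow> bool" where
  "valid Leaf = True"
| "valid (Node cs) = (2 \<le> length cs \<and> (\<forall>c\<in>set cs. valid c))"

fun nleaves :: "ptree \<Rightarrow> nat" where
  "nleaves Leaf = 1"
| "nleaves (Node cs) = sum_list (map nleaves cs)"

definition deg :: "ptree \<Rightarrow> nat" where
  "deg t = nleaves t - 1"

fun ideg :: "ptree \<Rightarrow> nat" where
  "ideg Leaf = 0"
| "ideg (Node cs) = 1 + sum_list (map ideg cs)"

fun mk :: "ptree list \<Rightarrow> ptree" where
  "mk [c] = c"
| "mk cs = Node cs"

text \<open>Leaves are indexed from 0; leaf index i is leaf number i+1 of the paper.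
  lcut i t is the left part (leaves 0..i kept), rcut i t the right part.\<close>
fun lcut :: "nat \<Rightarrow> ptree \<Rightarrow> ptree"
and lcs :: "nat \<Rightarrow> ptree list \<Rightarrow> ptree list" where
  "lcut i Leaf = Leaf"
| "lcut i (Node cs) = mk (lcs i cs)"
| "lcs i [] = []"
| "lcs i (c # cs) = (if i < nleaves c then [lcut i c] else c # lcs (i - nleaves c) cs)"

fun rcut :: "nat \<Rightarrow> ptree \<Rightarrow> ptree"
and rcs :: "nat \<Rightarrow> ptree list \<Rightarrow> ptree list" where
  "rcut i Leaf = Leaf"
| "rcut i (Node cs) = mk (rcs i cs)"
| "rcs i [] = []"
| "rcs i (c # cs) = (if i < nleaves c then rcut i c # cs else rcs (i - nleaves c) cs)"

definition allowable :: "nat \<Rightarrow> ptree \<Rightarrow> bool" where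
  "allowable i t \<longleftrightarrow> ideg (lcut i t) + ideg (rcut i t) = ideg t"

text \<open>Grafting s/r: the root of s is identified with the leftmost leaf of r.\<close>
fun graft :: "ptree \<Rightarrow> ptree \<Rightarrow> ptree" where
  "graft s Leaf = s"
| "graft s (Node []) = Node []"
| "graft s (Node (c # cs)) = Node (graft s c # cs)"

definition GD :: "ptree \<Rightarrow> nat set" where
  "GD t = {i. 1 \<le> i \<and> i \<le> deg t - 1 \<and>
     (\<exists>s r. valid s \<and> valid r \<and> t = graft s r \<and> deg s = i)}"

text \<open>Left rotation (anywhere in the tree): rot s t means t is a left rotation of s.\<close>
inductive rot :: "ptree \<Rightarrow> ptree \<Rightarrow> bool" where
  here: "cs \<noteq> [] \<Longrightarrow> ds \<noteq> [] \<Longrightarrow>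
     rot (Node (cs @ [Node (d1 # ds)])) (Node (Node (cs @ [d1]) # ds))"
| inside: "rot c c' \<Longrightarrow> rot (Node (xs @ c # ys)) (Node (xs @ c' # ys))"

definition tamari_le :: "ptree \<Rightarrow> ptree \<Rightarrow> bool" where
  "tamari_le s t \<longleftrightarrow> rot\<^sup>*\<^sup>* s t"

text \<open>Elements of TSym: coefficient functions on trees (finitely supported);
  elements of TSym \<otimes> TSym: coefficient functions on pairs of trees.\<close>
definition Fb :: "ptree \<Rightarrow> ptree \<Rightarrow> 'a::comm_ring_1" where
  "Fb t = (\<lambda>u. if u = t then 1 else 0)"

definition tensor :: "(ptree \<Rightarrow> 'a::comm_ring_1) \<Rightarrow> (ptree \<Rightarrow> 'a) \<Rightarrow> ptree \<times> ptree \<Rightarrow> 'a" where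
  "tensor x y = (\<lambda>(u, v). x u * y v)"

definition DeltaF :: "ptree \<Rightarrow> ptree \<times> ptree \<Rightarrow> 'a::comm_ring_1" where
  "DeltaF t = (\<lambda>p. \<Sum>i\<in>{i. i \<le> deg t \<and> allowable i t}.
                 if p = (lcut i t, rcut i t) then 1 else 0)"

definition Delta :: "(ptree \<Rightarrow> 'a::comm_ring_1) \<Rightarrow> ptree \<times> ptree \<Rightarrow> 'a" where
  "Delta x = (\<lambda>p. \<Sum>t\<in>{t. x t \<noteq> 0}. x t * DeltaF t p)"

definition Delta_plus :: "(ptree \<Rightarrow> 'a::comm_ring_1) \<Rightarrow> ptree \<times> ptree \<Rightarrow> 'a" where
  "Delta_plus x = (\<lambda>p. Delta x p - tensor x (Fb Leaf) p - tensor (Fb Leaf) x p)"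

end

theory Submission
  imports Defs
begin

abbreviation sn :: "ptree list \<Rightarrow> nat" where "sn cs \<equiv> sum_list (map nleaves cs)"

lemma mk_eq: "mk l = (if length l = 1 then hd l else Node l)"
  by (cases l rule: mk.cases) auto

lemma nleaves_mk[simp]: "nleaves (mk l) = sn l"
  by (cases l rule: mk.cases) auto

lemma valid_mk: "l \<noteq> [] \<Longrightarrow> \<forall>c\<in>set l. valid c \<Longrightarrow> valid (mk l)"
  by (cases l rule: mk.cases) auto

lemma lcs_append: "lcs i (xs @ ys) = (if i < sn xs then lcs i xs else xs @ lcs (i - sn xs) ys)"
  by (induction xs arbitrary: i) (auto simp: diff_diff_add)

lemma rcs_append: "rcs i (xs @ ys) = (if i < sn xs then rcs i xs @ ys else rcs (i - sn xs) ys)"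
  by (induction xs arbitrary: i) (auto simp: diff_diff_add)

lemma lcs_ne: "cs \<noteq> [] \<Longrightarrow> lcs i cs \<noteq> []" by (cases cs) auto
lemma rcs_ne: "i < sn cs \<Longrightarrow> rcs i cs \<noteq> []" by (induction cs arbitrary: i) auto
lemma rcs_ge: "sn cs \<le> i \<Longrightarrow> rcs i cs = []" by (induction cs arbitrary: i) auto
lemma lcs_ge: "sn cs \<le> i \<Longrightarrow> lcs i cs = cs" by (induction cs arbitrary: i) auto

lemma nleaves_lcut:
  "i < nleaves t \<Longrightarrow> nleaves (lcut i t) = i + 1"
  "i < sn cs \<Longrightarrow> sn (lcs i cs) = i + 1"
  by (induction i t and i cs rule: lcut_lcs.induct) auto

lemma nleaves_rcut:
  "i < nleaves t \<Longrightarrow> nleaves (rcut i t) = nleaves t - i"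
  "i < sn cs \<Longrightarrow> sn (rcs i cs) = sn cs - i"
  by (induction i t and i cs rule: rcut_rcs.induct) auto

lemma valid_lcut:
  "valid t \<Longrightarrow> valid (lcut i t)"
  "\<forall>c\<in>set cs. valid c \<Longrightarrow> \<forall>c\<in>set (lcs i cs). valid c"
  by (induction i t and i cs rule: lcut_lcs.induct) (auto intro!: valid_mk lcs_ne)

lemma valid_rcut:
  "valid t \<Longrightarrow> i < nleaves t \<Longrightarrow> valid (rcut i t)"
  "\<forall>c\<in>set cs. valid c \<Longrightarrow> \<forall>c\<in>set (rcs i cs). valid c"
  by (induction i t and i cs rule: rcut_rcs.induct) (auto intro!: valid_mk rcs_ne)

lemma len_le_sn: "\<forall>c\<in>set cs. 1 \<le> nleaves c \<Longrightarrow> length cs \<le> sn cs"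
  by (induction cs) auto

lemma valid_nleaves: "valid t \<Longrightarrow> 1 \<le> nleaves t"
proof (induction t)
  case (Node cs)
  then have "length cs \<le> sn cs" by (intro len_le_sn) auto
  with Node show ?case by auto
qed simp

lemma valid_Node_nleaves: "valid (Node cs) \<Longrightarrow> 2 \<le> nleaves (Node cs)"
  using len_le_sn[of cs] valid_nleaves by fastforce

lemma valid_nleaves1: "valid t \<Longrightarrow> nleaves t = 1 \<Longrightarrow> t = Leaf"
proof (cases t)
  case (Node cs)
  assume "valid t" "nleaves t = 1"
  with Node valid_Node_nleaves[of cs] show ?thesis by simp
qed simp

lemma rot_nleaves: "rot s t \<Longrightarrow> nleaves s = nleaves t"
  by (induction rule: rot.induct) auto

lemma rot_ideg: "rot s t \<Longrightarrow> ideg s = ideg t"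
  by (induction rule: rot.induct) auto

lemma rot_valid: "rot s t \<Longrightarrow> valid s \<Longrightarrow> valid t"
  by (induction rule: rot.induct) auto

fun phi :: "ptree \<Rightarrow> nat" where
  "phi Leaf = 0"
| "phi (Node []) = 0"
| "phi (Node (c # cs)) = nleaves c + sum_list (map phi (c # cs))"

lemma rot_phi: "rot s t \<Longrightarrow> valid s \<Longrightarrow> phi s < phi t"
proof (induction rule: rot.induct)
  case (here cs ds d1)
  then obtain c cs' where cs: "cs = c # cs'" by (cases cs) auto
  from here cs have "1 \<le> nleaves c" using valid_nleaves by auto
  with cs show ?case by simp
next
  case (inside c c' xs ys)
  then have "phi c < phi c'" "nleaves c = nleaves c'" using rot_nleaves by auto
  then show ?case by (cases xs) auto
qed

lemma rtc_props:
  assumes "rot\<^sup>*\<^sup>* s t" "valid s"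
  shows "valid t \<and> nleaves t = nleaves s \<and> ideg t = ideg s \<and> phi s \<le> phi t \<and> (s \<noteq> t \<longrightarrow> phi s < phi t)"
  using assms(1)
proof (induction rule: rtranclp_induct)
  case (step y z)
  then show ?case using rot_valid[of y z] rot_phi[of y z] rot_nleaves[of y z] rot_ideg[of y z]
    by auto
qed (use assms in simp)

lemma tam_antisym: "valid s \<Longrightarrow> tamari_le s t \<Longrightarrow> tamari_le t s \<Longrightarrow> s = t"
  unfolding tamari_le_def using rtc_props by (metis leD)

lemma tam_trans: "tamari_le s t \<Longrightarrow> tamari_le t u \<Longrightarrow> tamari_le s u"
  unfolding tamari_le_def by auto

lemma tam_refl[simp]: "tamari_le s s"
  unfolding tamari_le_def by auto

lemma mem_le_sn: "c \<in> set cs \<Longrightarrow> \<forall>c\<in>set cs. 1 \<le> nleaves c \<Longrightarrow> nleaves c + length cs \<le> sn cs + 1"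
proof (induction cs)
  case (Cons a cs)
  then show ?case using len_le_sn[of cs] by auto
qed simp

lemma finite_trees: "finite {t. valid t \<and> nleaves t \<le> n}"
proof (induction n)
  case 0
  have "{t. valid t \<and> nleaves t \<le> 0} = {}" using valid_nleaves by fastforce
  then show ?case by (metis finite.emptyI)
next
  case (Suc n)
  let ?A = "{t. valid t \<and> nleaves t \<le> n}"
  have "{t. valid t \<and> nleaves t \<le> Suc n} \<subseteq> insert Leaf (Node ` {cs. set cs \<subseteq> ?A \<and> length cs \<le> Suc n})"
  proof
    fix t assume t: "t \<in> {t. valid t \<and> nleaves t \<le> Suc n}"
    show "t \<in> insert Leaf (Node ` {cs. set cs \<subseteq> ?A \<and> length cs \<le> Suc n})"
    proof (cases t)
      case (Node cs)
      have v: "\<forall>c\<in>set cs. 1 \<le> nleaves c" using t Node valid_nleaves by auto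
      have "length cs \<le> Suc n" using t Node len_le_sn[OF v] by auto
      moreover have "set cs \<subseteq> ?A"
      proof
        fix c assume "c \<in> set cs"
        then have "nleaves c + length cs \<le> sn cs + 1" using mem_le_sn v by blast
        then show "c \<in> ?A" using t Node \<open>c \<in> set cs\<close> by auto
      qed
      ultimately show ?thesis using Node by auto
    qed simp
  qed
  moreover have "finite (insert Leaf (Node ` {cs. set cs \<subseteq> ?A \<and> length cs \<le> Suc n}))"
    using finite_lists_length_le[OF Suc] by auto
  ultimately show ?case by (rule finite_subset)
qed

lemma finite_up: "valid s \<Longrightarrow> finite {t. tamari_le s t}"
  by (rule finite_subset[OF _ finite_trees[of "nleaves s"]])
     (auto simp: tamari_le_def dest: rtc_props)

lemma valid_up: "valid s \<Longrightarrow> tamari_le s t \<Longrightarrow> valid t"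
  unfolding tamari_le_def using rtc_props by blast

lemma up_induct[consumes 1]:
  assumes "valid t"
    and step: "\<And>t. valid t \<Longrightarrow> (\<And>u. tamari_le t u \<Longrightarrow> u \<noteq> t \<Longrightarrow> P u) \<Longrightarrow> P t"
  shows "P t"
  using assms(1)
proof (induction "card {u. tamari_le t u}" arbitrary: t rule: less_induct)
  case less
  show ?case
  proof (rule step[OF less.prems])
    fix u assume u: "tamari_le t u" "u \<noteq> t"
    have vu: "valid u" using valid_up less.prems u by blast
    have "t \<notin> {w. tamari_le u w}" using u tam_antisym[OF less.prems, of u] by auto
    moreover have "{w. tamari_le u w} \<subseteq> {w. tamari_le t w}" using u tam_trans by blast
    ultimately have "{w. tamari_le u w} \<subset> {w. tamari_le t w}" by auto
    then have "card {w. tamari_le u w} < card {w. tamari_le t w}"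
      using finite_up[OF less.prems] by (rule psubset_card_mono[rotated])
    then show "P u" using less.hyps vu by blast
  qed
qed

lemma uniq:
  fixes G :: "ptree \<Rightarrow> 'a::comm_ring_1"
  assumes "\<And>s. valid s \<Longrightarrow> (\<Sum>t\<in>{t. tamari_le s t}. G t) = 0" "valid t"
  shows "G t = 0"
  using assms(2)
proof (induction rule: up_induct)
  case (1 t)
  have "(\<Sum>u\<in>{u. tamari_le t u}. G u) = G t + (\<Sum>u\<in>{u. tamari_le t u} - {t}. G u)"
    using finite_up[OF 1(1)] by (subst sum.remove[of _ t]) auto
  also have "(\<Sum>u\<in>{u. tamari_le t u} - {t}. G u) = 0"
    using 1(2) valid_up[OF 1(1)] by (intro sum.neutral) auto
  finally show ?case using assms(1)[OF 1(1)] by simp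
qed

lemma node_cong: "rot\<^sup>*\<^sup>* a b \<Longrightarrow> rot\<^sup>*\<^sup>* (Node (xs @ a # ys)) (Node (xs @ b # ys))"
proof (induction rule: rtranclp_induct)
  case (step y z)
  then show ?case using rot.inside[of y z xs ys] by (meson rtranclp.rtrancl_into_rtrancl)
qed simp

lemma mk_cong: "rot\<^sup>*\<^sup>* a b \<Longrightarrow> rot\<^sup>*\<^sup>* (mk (xs @ a # ys)) (mk (xs @ b # ys))"
proof (cases "xs = [] \<and> ys = []")
  case True
  assume "rot\<^sup>*\<^sup>* a b" then show ?thesis using True by simp
next
  case False
  assume "rot\<^sup>*\<^sup>* a b"
  moreover have "mk (xs @ a # ys) = Node (xs @ a # ys)" "mk (xs @ b # ys) = Node (xs @ b # ys)"
    using False by (auto simp: mk_eq)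
  ultimately show ?thesis by (simp add: node_cong)
qed

lemma rot_cuts: "rot s t \<Longrightarrow> rot\<^sup>*\<^sup>* (lcut j s) (lcut j t) \<and> rot\<^sup>*\<^sup>* (rcut j s) (rcut j t)"
proof (induction arbitrary: j rule: rot.induct)
  case (here cs ds d1)
  let ?N = "sn cs"
  have l: "rot\<^sup>*\<^sup>* (lcut j (Node (cs @ [Node (d1 # ds)]))) (lcut j (Node (Node (cs @ [d1]) # ds)))"
  proof -
    consider "j < ?N" | "?N \<le> j" "j < ?N + nleaves d1" | "?N + nleaves d1 \<le> j" by linarith
    then show ?thesis
    proof cases
      case 1
      then show ?thesis by (simp add: lcs_append)
    next
      case 2
      have "j - ?N < nleaves d1" using 2 by linarith
      then have "lcut j (Node (cs @ [Node (d1 # ds)])) = mk (cs @ [lcut (j - ?N) d1])"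
        "lcut j (Node (Node (cs @ [d1]) # ds)) = mk (cs @ [lcut (j - ?N) d1])"
        using 2 by (simp_all add: lcs_append)
      then show ?thesis by simp
    next
      case 3
      let ?ds = "lcs (j - ?N - nleaves d1) ds"
      have ne: "?ds \<noteq> []" using here lcs_ne by blast
      have nd: "\<not> j - ?N < nleaves d1" using 3 by linarith
      from 3 nd have "lcut j (Node (cs @ [Node (d1 # ds)])) = Node (cs @ [Node (d1 # ?ds)])"
        using here ne by (simp add: lcs_append mk_eq diff_diff_add lcs_ge)
      moreover from 3 nd have "lcut j (Node (Node (cs @ [d1]) # ds)) = Node (Node (cs @ [d1]) # ?ds)"
        using here ne by (simp add: lcs_append mk_eq diff_diff_add)
      ultimately show ?thesis using rot.here[OF here(1) ne, of d1] by simp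
    qed
  qed
  have r: "rot\<^sup>*\<^sup>* (rcut j (Node (cs @ [Node (d1 # ds)]))) (rcut j (Node (Node (cs @ [d1]) # ds)))"
  proof -
    consider "j < ?N" | "?N \<le> j" "j < ?N + nleaves d1" | "?N + nleaves d1 \<le> j" by linarith
    then show ?thesis
    proof cases
      case 1
      let ?cs = "rcs j cs"
      have ne: "?cs \<noteq> []" using 1 rcs_ne by blast
      from 1 have "rcut j (Node (cs @ [Node (d1 # ds)])) = Node (?cs @ [Node (d1 # ds)])"
        using ne by (simp add: rcs_append mk_eq)
      moreover from 1 have "rcut j (Node (Node (cs @ [d1]) # ds)) = Node (Node (?cs @ [d1]) # ds)"
        using here ne by (simp add: rcs_append mk_eq)
      ultimately show ?thesis using rot.here[OF ne here(2), of d1] by simp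
    next
      case 2
      have "j - ?N < nleaves d1" using 2 by linarith
      then have "rcut j (Node (cs @ [Node (d1 # ds)])) = mk (rcut (j - ?N) d1 # ds)"
        "rcut j (Node (Node (cs @ [d1]) # ds)) = mk (rcut (j - ?N) d1 # ds)"
        using here 2 by (simp_all add: rcs_append mk_eq)
      then show ?thesis by simp
    next
      case 3
      have nd: "\<not> j - ?N < nleaves d1" using 3 by linarith
      show ?thesis
      proof (cases "j < ?N + nleaves d1 + sn ds")
        case True
        then have h: "j - ?N < nleaves d1 + sn ds" using 3 by linarith
        have "rcut j (Node (cs @ [Node (d1 # ds)])) = mk (rcs (j - ?N - nleaves d1) ds)"
          using 3 nd h by (simp add: rcs_append)
        moreover have "rcut j (Node (Node (cs @ [d1]) # ds)) = mk (rcs (j - ?N - nleaves d1) ds)"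
          using 3 by (simp add: rcs_append diff_diff_add)
        ultimately show ?thesis by simp
      next
        case False
        then have h: "\<not> j - ?N < nleaves d1 + sn ds" using 3 by linarith
        have "rcut j (Node (cs @ [Node (d1 # ds)])) = Node []"
          using 3 nd h by (simp add: rcs_append)
        moreover have "rcut j (Node (Node (cs @ [d1]) # ds)) = Node []"
          using 3 False by (simp add: rcs_append rcs_ge)
        ultimately show ?thesis by simp
      qed
    qed
  qed
  from l r show ?case by blast
next
  case (inside c c' xs ys)
  have nl: "nleaves c = nleaves c'" using inside rot_nleaves by blast
  have cc: "rot\<^sup>*\<^sup>* c c'" using inside(1) by blast
  let ?X = "sn xs"
  consider "j < ?X" | "?X \<le> j" "j < ?X + nleaves c" | "?X + nleaves c \<le> j" by linarith
  then show ?case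
  proof cases
    case 1
    then show ?thesis
      using mk_cong[of c c' "rcs j xs" ys] cc by (simp add: lcs_append rcs_append)
  next
    case 2
    have "j - ?X < nleaves c" using 2 by linarith
    then show ?thesis
      using 2 mk_cong[of "lcut (j - ?X) c" "lcut (j - ?X) c'" xs "[]"]
        mk_cong[of "rcut (j - ?X) c" "rcut (j - ?X) c'" "[]" ys] inside(2)[of "j - ?X"] nl
      by (simp add: lcs_append rcs_append)
  next
    case 3
    have "\<not> j - ?X < nleaves c" using 3 by linarith
    then show ?thesis
      using 3 mk_cong[of c c' xs "lcs (j - ?X - nleaves c) ys"] cc nl
      by (simp add: lcs_append rcs_append diff_diff_add)
  qed
qed

lemma rtc_cuts: "rot\<^sup>*\<^sup>* s t \<Longrightarrow> rot\<^sup>*\<^sup>* (lcut j s) (lcut j t) \<and> rot\<^sup>*\<^sup>* (rcut j s) (rcut j t)"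
proof (induction rule: rtranclp_induct)
  case (step y z)
  then show ?case using rot_cuts[of y z j] by (meson rtranclp_trans)
qed simp

lemma rtc_ideg: "rot\<^sup>*\<^sup>* s t \<Longrightarrow> ideg s = ideg t"
  by (induction rule: rtranclp_induct) (auto dest: rot_ideg)

lemma rtc_allowable: "rot\<^sup>*\<^sup>* s t \<Longrightarrow> allowable j s = allowable j t"
  unfolding allowable_def using rtc_cuts[of s t j] rtc_ideg by metis

lemma graft_nleaves: "valid y \<Longrightarrow> nleaves (graft x y) = nleaves x + nleaves y - 1"
proof (induction y)
  case (Node cs)
  then obtain c cs' where cs: "cs = c # cs'" by (cases cs) auto
  with Node have "1 \<le> nleaves c" using valid_nleaves by auto
  with Node cs show ?case by auto
qed simp

lemma graft_ideg: "valid y \<Longrightarrow> ideg (graft x y) = ideg x + ideg y"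
proof (induction y)
  case (Node cs)
  then obtain c cs' where cs: "cs = c # cs'" by (cases cs) auto
  with Node show ?case by auto
qed simp

lemma graft_valid: "valid x \<Longrightarrow> valid y \<Longrightarrow> valid (graft x y)"
proof (induction y)
  case (Node cs)
  then obtain c cs' where cs: "cs = c # cs'" by (cases cs) auto
  with Node show ?case by auto
qed simp

lemma graft_Leaf: "valid y \<Longrightarrow> graft Leaf y = y"
proof (induction y)
  case (Node cs)
  then obtain c cs' where cs: "cs = c # cs'" by (cases cs) auto
  with Node show ?case by auto
qed simp

lemma graft_rot_left: "rot x x' \<Longrightarrow> valid y \<Longrightarrow> rot (graft x y) (graft x' y)"
proof (induction y)
  case (Node cs)
  then obtain c cs' where cs: "cs = c # cs'" by (cases cs) auto
  with Node have "rot (graft x c) (graft x' c)" by auto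
  with cs show ?case using rot.inside[of _ _ "[]" cs'] by auto
qed simp

lemma graft_rot_right: "rot y y' \<Longrightarrow> rot (graft x y) (graft x y')"
proof (induction rule: rot.induct)
  case (here cs ds d1)
  then obtain c cs' where cs: "cs = c # cs'" by (cases cs) auto
  show ?case using rot.here[of "graft x c # cs'" ds d1] here cs by simp
next
  case (inside c c' xs ys)
  show ?case
  proof (cases xs)
    case Nil
    then show ?thesis using inside rot.inside[of _ _ "[]" ys] by simp
  next
    case (Cons a xs')
    then show ?thesis using inside rot.inside[of c c' "graft x a # xs'" ys] by simp
  qed
qed

lemma graft_mono_left: "rot\<^sup>*\<^sup>* x x' \<Longrightarrow> valid y \<Longrightarrow> rot\<^sup>*\<^sup>* (graft x y) (graft x' y)"
proof (induction rule: rtranclp_induct)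
  case (step a b)
  then show ?case using graft_rot_left[of a b y] by (meson rtranclp.rtrancl_into_rtrancl)
qed simp

lemma graft_mono_right: "rot\<^sup>*\<^sup>* y y' \<Longrightarrow> rot\<^sup>*\<^sup>* (graft x y) (graft x y')"
proof (induction rule: rtranclp_induct)
  case (step a b)
  then show ?case using graft_rot_right[of a b x] by (meson rtranclp.rtrancl_into_rtrancl)
qed simp

lemma graft_G: "A \<noteq> [] \<Longrightarrow> valid b \<Longrightarrow> rot\<^sup>*\<^sup>* (Node (A @ [graft a b])) (graft (Node (A @ [a])) b)"
proof (induction b)
  case (Node cs)
  then obtain b1 bs where cs1: "cs = b1 # bs" by (cases cs) auto
  with Node have "bs \<noteq> []" by auto
  note cs = cs1 this
  have "rot (Node (A @ [Node (graft a b1 # bs)])) (Node (Node (A @ [graft a b1]) # bs))"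
    using rot.here[OF Node(2) cs(2)] .
  moreover have "rot\<^sup>*\<^sup>* (Node (Node (A @ [graft a b1]) # bs)) (Node (graft (Node (A @ [a])) b1 # bs))"
    using node_cong[of _ _ "[]" bs] Node cs by auto
  ultimately show ?case using cs by (simp add: converse_rtranclp_into_rtranclp)
qed simp

lemma cut_last: "valid x \<Longrightarrow> lcut (nleaves x - 1) x = x \<and> rcut (nleaves x - 1) x = Leaf"
proof (induction x)
  case (Node cs)
  then have ne: "cs \<noteq> []" by auto
  then obtain pre c where pc: "cs = pre @ [c]" by (metis rev_exhaust)
  have vc: "valid c" "1 \<le> nleaves c" using Node pc valid_nleaves by auto
  obtain k where k: "nleaves c = Suc k" using vc by (cases "nleaves c") auto
  have "lcut (nleaves c - 1) c = c \<and> rcut (nleaves c - 1) c = Leaf" using Node(1)[of c] pc vc by auto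
  then have IH: "lcut k c = c" "rcut k c = Leaf" using k by auto
  have e: "sn cs - 1 = sn pre + k" using pc k by simp
  have "lcs (sn cs - 1) cs = cs" "rcs (sn cs - 1) cs = [Leaf]"
    unfolding e using pc k IH by (simp_all add: lcs_append rcs_append)
  moreover have "mk cs = Node cs" using Node by (simp add: mk_eq)
  ultimately show ?case by simp
qed simp

lemma L1: "valid x \<Longrightarrow> valid y \<Longrightarrow> lcut (deg x) (graft x y) = x \<and> rcut (deg x) (graft x y) = y"
proof (induction y)
  case Leaf
  then show ?case using cut_last by (simp add: deg_def)
next
  case (Node cs)
  then obtain y1 ys where cs1: "cs = y1 # ys" by (cases cs) auto
  with Node have "ys \<noteq> []" by auto
  note cs = cs1 this
  have v: "valid y1" using Node cs by auto
  have "1 \<le> nleaves y1" "1 \<le> nleaves x" using v Node valid_nleaves by auto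
  then have lt: "deg x < nleaves (graft x y1)" using graft_nleaves[OF v] by (simp add: deg_def)
  have IH: "lcut (deg x) (graft x y1) = x" "rcut (deg x) (graft x y1) = y1" using Node cs v by auto
  show ?case using cs lt IH by (simp add: mk_eq)
qed

lemma cut_split: "i < sn cs \<Longrightarrow> \<exists>pre c post i'. cs = pre @ c # post \<and> i = sn pre + i' \<and> i' < nleaves c
   \<and> lcs i cs = pre @ [lcut i' c] \<and> rcs i cs = rcut i' c # post"
proof (induction cs arbitrary: i)
  case (Cons a cs)
  show ?case
  proof (cases "i < nleaves a")
    case True
    then show ?thesis by (intro exI[of _ "[]"] exI[of _ a] exI[of _ cs] exI[of _ i]) auto
  next
    case False
    then have "i - nleaves a < sn cs" using Cons by auto
    from Cons(1)[OF this] obtain pre c post i' where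
      h: "cs = pre @ c # post" "i - nleaves a = sn pre + i'" "i' < nleaves c"
      "lcs (i - nleaves a) cs = pre @ [lcut i' c]" "rcs (i - nleaves a) cs = rcut i' c # post" by blast
    show ?thesis using False h
      by (intro exI[of _ "a # pre"] exI[of _ c] exI[of _ post] exI[of _ i']) auto
  qed
qed simp

lemma ideg_mk_snoc: "ideg (mk (pre @ [a])) = (if pre = [] then ideg a else 1 + sum_list (map ideg pre) + ideg a)"
  by (simp add: mk_eq)

lemma ideg_mk_cons: "ideg (mk (a # post)) = (if post = [] then ideg a else 1 + ideg a + sum_list (map ideg post))"
  by (simp add: mk_eq)

lemma node_split:
  assumes "valid (Node cs)" "i < nleaves (Node cs)"
  obtains pre c post i' where "cs = pre @ c # post" "i = sn pre + i'" "i' < nleaves c"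
    "lcut i (Node cs) = mk (pre @ [lcut i' c])" "rcut i (Node cs) = mk (rcut i' c # post)"
    "pre \<noteq> [] \<or> post \<noteq> []" "valid c"
proof -
  from cut_split[of i cs] assms obtain pre c post i' where
    h: "cs = pre @ c # post" "i = sn pre + i'" "i' < nleaves c"
    "lcs i cs = pre @ [lcut i' c]" "rcs i cs = rcut i' c # post" by auto
  moreover have "pre \<noteq> [] \<or> post \<noteq> []" using assms h by auto
  moreover have "valid c" using assms h by auto
  ultimately show ?thesis using that by auto
qed

lemma ideg_ge: "valid t \<Longrightarrow> i < nleaves t \<Longrightarrow> ideg t \<le> ideg (lcut i t) + ideg (rcut i t)"
proof (induction t arbitrary: i)
  case (Node cs)
  from Node.prems obtain pre c post i' where h: "cs = pre @ c # post" "i = sn pre + i'" "i' < nleaves c"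
    "lcut i (Node cs) = mk (pre @ [lcut i' c])" "rcut i (Node cs) = mk (rcut i' c # post)"
    "pre \<noteq> [] \<or> post \<noteq> []" "valid c" by (rule node_split)
  have "ideg c \<le> ideg (lcut i' c) + ideg (rcut i' c)" using Node.IH[of c i'] h by auto
  then show ?case using h by (auto simp: ideg_mk_snoc ideg_mk_cons)
qed simp

lemma allow_core: "valid s \<Longrightarrow> i < nleaves s \<Longrightarrow> allowable i s \<Longrightarrow> rot\<^sup>*\<^sup>* s (graft (lcut i s) (rcut i s))"
proof (induction s arbitrary: i)
  case Leaf
  then show ?case by simp
next
  case (Node cs)
  from Node.prems(1,2) obtain pre c post i' where h: "cs = pre @ c # post" "i = sn pre + i'" "i' < nleaves c"
    "lcut i (Node cs) = mk (pre @ [lcut i' c])" "rcut i (Node cs) = mk (rcut i' c # post)"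
    "pre \<noteq> [] \<or> post \<noteq> []" "valid c" by (rule node_split)
  have ge: "ideg c \<le> ideg (lcut i' c) + ideg (rcut i' c)" using ideg_ge h by auto
  have al: "ideg (lcut i (Node cs)) + ideg (rcut i (Node cs)) = ideg (Node cs)"
    using Node.prems unfolding allowable_def by simp
  have ac: "allowable i' c" and one: "pre = [] \<or> post = []"
    using al ge h unfolding allowable_def by (auto simp: ideg_mk_snoc ideg_mk_cons split: if_splits)
  have IH: "rot\<^sup>*\<^sup>* c (graft (lcut i' c) (rcut i' c))" using Node.IH[of c i'] h ac by auto
  have vr: "valid (rcut i' c)" using valid_rcut h by auto
  show ?case
  proof (cases "pre = []")
    case True
    then have pn: "post \<noteq> []" using h by auto
    have "graft (lcut i (Node cs)) (rcut i (Node cs)) = Node (graft (lcut i' c) (rcut i' c) # post)"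
      using h True pn by (simp add: mk_eq)
    then show ?thesis using node_cong[OF IH, of "[]" post] h True by simp
  next
    case False
    then have pn: "post = []" using one by auto
    have "graft (lcut i (Node cs)) (rcut i (Node cs)) = graft (Node (pre @ [lcut i' c])) (rcut i' c)"
      using h False pn by (simp add: mk_eq)
    moreover have "rot\<^sup>*\<^sup>* (Node (pre @ [c])) (Node (pre @ [graft (lcut i' c) (rcut i' c)]))"
      using node_cong[OF IH, of pre "[]"] by simp
    moreover have "rot\<^sup>*\<^sup>* (Node (pre @ [graft (lcut i' c) (rcut i' c)])) (graft (Node (pre @ [lcut i' c])) (rcut i' c))"
      using graft_G[OF False vr] .
    ultimately show ?thesis using h pn by (metis rtranclp_trans)
  qed
qed

lemma L2:
  assumes vs: "valid s" and vx: "valid x" and vy: "valid y"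
  shows "tamari_le s (graft x y) \<longleftrightarrow>
    (deg x \<le> deg s \<and> allowable (deg x) s \<and> tamari_le (lcut (deg x) s) x \<and> tamari_le (rcut (deg x) s) y)"
proof
  assume le: "tamari_le s (graft x y)"
  let ?t = "graft x y"
  have r: "rot\<^sup>*\<^sup>* s ?t" using le unfolding tamari_le_def .
  have nl: "nleaves ?t = nleaves s" using rtc_props[OF r vs] by simp
  have "1 \<le> nleaves y" "1 \<le> nleaves x" using vx vy valid_nleaves by auto
  then have d: "deg x \<le> deg s" using nl graft_nleaves[OF vy, of x] by (simp add: deg_def)
  have c: "lcut (deg x) ?t = x" "rcut (deg x) ?t = y" using L1[OF vx vy] by auto
  have "allowable (deg x) ?t" unfolding allowable_def c using graft_ideg[OF vy] by simp
  then have "allowable (deg x) s" using rtc_allowable[OF r] by simp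
  moreover have "tamari_le (lcut (deg x) s) x" "tamari_le (rcut (deg x) s) y"
    using rtc_cuts[OF r, of "deg x"] c unfolding tamari_le_def by auto
  ultimately show "deg x \<le> deg s \<and> allowable (deg x) s \<and> tamari_le (lcut (deg x) s) x \<and> tamari_le (rcut (deg x) s) y"
    using d by simp
next
  assume h: "deg x \<le> deg s \<and> allowable (deg x) s \<and> tamari_le (lcut (deg x) s) x \<and> tamari_le (rcut (deg x) s) y"
  let ?j = "deg x"
  have "deg x \<le> deg s" using h by simp
  then have lt: "?j < nleaves s" using valid_nleaves[OF vs] valid_nleaves[OF vx] unfolding deg_def by linarith
  have vr: "valid (rcut ?j s)" using valid_rcut(1)[OF vs lt] .
  have "rot\<^sup>*\<^sup>* s (graft (lcut ?j s) (rcut ?j s))" using allow_core[OF vs lt] h by simp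
  also have "rot\<^sup>*\<^sup>* \<dots> (graft x (rcut ?j s))" using graft_mono_left[OF _ vr] h unfolding tamari_le_def by simp
  also have "rot\<^sup>*\<^sup>* \<dots> (graft x y)" using graft_mono_right h unfolding tamari_le_def by simp
  finally show "tamari_le s (graft x y)" unfolding tamari_le_def .
qed

lemma J_lt: "valid s \<Longrightarrow> j \<le> deg s \<Longrightarrow> j < nleaves s"
  using valid_nleaves[of s] unfolding deg_def by linarith

lemma M_supp:
  fixes M :: "ptree \<Rightarrow> ptree \<Rightarrow> 'a::comm_ring_1"
  assumes M_def: "\<And>s u. valid s \<Longrightarrow> Fb s u = (\<Sum>t\<in>{t. tamari_le s t}. M t u)"
    and "valid t"
  shows "\<not> tamari_le t u \<longrightarrow> M t u = 0"
  using assms(2)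
proof (induction rule: up_induct)
  case (1 t)
  show ?case
  proof
    assume nle: "\<not> tamari_le t u"
    have "Fb t u = M t u + (\<Sum>v\<in>{v. tamari_le t v} - {t}. M v u)"
      unfolding M_def[OF 1(1)] using finite_up[OF 1(1)] by (subst sum.remove[of _ t]) auto
    also have "(\<Sum>v\<in>{v. tamari_le t v} - {t}. M v u) = 0"
    proof (intro sum.neutral ballI)
      fix v assume v: "v \<in> {v. tamari_le t v} - {t}"
      then have "\<not> tamari_le v u" using nle tam_trans by blast
      then show "M v u = 0" using 1(2) v by auto
    qed
    moreover have "u \<noteq> t" using nle by auto
    ultimately show "M t u = 0" by (simp add: Fb_def)
  qed
qed

lemma stepA:
  fixes M :: "ptree \<Rightarrow> ptree \<Rightarrow> 'a::comm_ring_1"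
  assumes M_def: "\<And>s u. valid s \<Longrightarrow> Fb s u = (\<Sum>t\<in>{t. tamari_le s t}. M t u)"
    and vs: "valid s"
  shows "(\<Sum>t\<in>{t. tamari_le s t}. Delta (M t) p) = DeltaF s p"
proof -
  let ?U = "{t. tamari_le s t}"
  have fU: "finite ?U" using finite_up[OF vs] .
  have "\<And>t. t \<in> ?U \<Longrightarrow> Delta (M t) p = (\<Sum>u\<in>?U. M t u * DeltaF u p)"
  proof -
    fix t assume t: "t \<in> ?U"
    then have vt: "valid t" using valid_up vs by auto
    have sub: "{u. M t u \<noteq> 0} \<subseteq> ?U"
      using M_supp[OF M_def vt] t tam_trans by auto
    show "Delta (M t) p = (\<Sum>u\<in>?U. M t u * DeltaF u p)"
      unfolding Delta_def by (rule sum.mono_neutral_left[OF fU sub]) auto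
  qed
  then have "(\<Sum>t\<in>?U. Delta (M t) p) = (\<Sum>t\<in>?U. \<Sum>u\<in>?U. M t u * DeltaF u p)" by simp
  also have "\<dots> = (\<Sum>u\<in>?U. (\<Sum>t\<in>?U. M t u) * DeltaF u p)"
    by (subst sum.swap) (simp add: sum_distrib_right)
  also have "\<dots> = (\<Sum>u\<in>?U. Fb s u * DeltaF u p)" using M_def[OF vs] by simp
  also have "\<dots> = (\<Sum>u\<in>?U. if s = u then DeltaF u p else 0)"
    by (intro sum.cong) (auto simp: Fb_def)
  also have "\<dots> = DeltaF s p" using fU by (simp add: sum.delta)
  finally show ?thesis .
qed

definition SG :: "ptree \<Rightarrow> (ptree \<times> ptree) set" where
  "SG t = {(x, y). valid x \<and> valid y \<and> graft x y = t}"

lemma finite_SG: "finite (SG t)"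
proof -
  have "SG t \<subseteq> {x. valid x \<and> nleaves x \<le> nleaves t} \<times> {x. valid x \<and> nleaves x \<le> nleaves t}"
  proof
    fix q assume "q \<in> SG t"
    then obtain x y where q: "q = (x, y)" "valid x" "valid y" "graft x y = t" by (auto simp: SG_def)
    then have "nleaves t = nleaves x + nleaves y - 1" using graft_nleaves by auto
    moreover have "1 \<le> nleaves x" "1 \<le> nleaves y" using q valid_nleaves by auto
    ultimately show "q \<in> {x. valid x \<and> nleaves x \<le> nleaves t} \<times> {x. valid x \<and> nleaves x \<le> nleaves t}"
      using q by auto
  qed
  then show ?thesis using finite_trees by (metis finite_SigmaI finite_subset)
qed

lemma stepB:
  fixes M :: "ptree \<Rightarrow> ptree \<Rightarrow> 'a::comm_ring_1"
  assumes M_def: "\<And>s u. valid s \<Longrightarrow> Fb s u = (\<Sum>t\<in>{t. tamari_le s t}. M t u)"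
    and vs: "valid s"
  shows "(\<Sum>t\<in>{t. tamari_le s t}. \<Sum>q\<in>SG t. M (fst q) a * M (snd q) b) = DeltaF s (a, b)"
proof -
  let ?U = "{t. tamari_le s t}"
  let ?J = "{i. i \<le> deg s \<and> allowable i s}"
  let ?f = "\<lambda>q. M (fst q) a * M (snd q) b"
  let ?P = "\<lambda>j. {x. tamari_le (lcut j s) x} \<times> {y. tamari_le (rcut j s) y}"
  have fU: "finite ?U" using finite_up[OF vs] .
  have "(\<Sum>t\<in>?U. \<Sum>q\<in>SG t. ?f q) = sum ?f (\<Union> (SG ` ?U))"
    using fU finite_SG by (subst sum.UNION_disjoint) (auto simp: SG_def)
  also have "\<Union> (SG ` ?U) = \<Union> (?P ` ?J)"
  proof (intro set_eqI iffI)
    fix q assume "q \<in> \<Union> (SG ` ?U)"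
    then obtain x y where q: "q = (x, y)" "valid x" "valid y" "tamari_le s (graft x y)"
      by (auto simp: SG_def)
    then show "q \<in> \<Union> (?P ` ?J)" using L2[OF vs q(2,3)] by auto
  next
    fix q assume "q \<in> \<Union> (?P ` ?J)"
    then obtain j x y where q: "q = (x, y)" "j \<le> deg s" "allowable j s"
      "tamari_le (lcut j s) x" "tamari_le (rcut j s) y" by auto
    have lt: "j < nleaves s" using q(2) J_lt[OF vs] by simp
    have vx: "valid x" using valid_up[OF valid_lcut(1)[OF vs] q(4)] .
    have vy: "valid y" using valid_up[OF valid_rcut(1)[OF vs lt] q(5)] .
    have "nleaves x = j + 1"
      using rtc_props[of "lcut j s" x] q(4) valid_lcut(1)[OF vs] nleaves_lcut(1)[OF lt]
      unfolding tamari_le_def by auto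
    then have dx: "deg x = j" by (simp add: deg_def)
    have "tamari_le s (graft x y)" using L2[OF vs vx vy] q dx by auto
    then show "q \<in> \<Union> (SG ` ?U)" using q vx vy by (auto simp: SG_def)
  qed
  also have "sum ?f (\<Union> (?P ` ?J)) = (\<Sum>j\<in>?J. sum ?f (?P j))"
  proof (rule sum.UNION_disjoint)
    show "finite ?J" by simp
    show "\<forall>j\<in>?J. finite (?P j)"
    proof
      fix j assume j: "j \<in> ?J"
      then have lt: "j < nleaves s" using J_lt[OF vs] by simp
      show "finite (?P j)"
        using finite_up[OF valid_lcut(1)[OF vs]] finite_up[OF valid_rcut(1)[OF vs lt]] by simp
    qed
    show "\<forall>i\<in>?J. \<forall>j\<in>?J. i \<noteq> j \<longrightarrow> ?P i \<inter> ?P j = {}"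
    proof (intro ballI impI)
      fix i j assume i: "i \<in> ?J" and j: "j \<in> ?J" and ne: "i \<noteq> j"
      have "\<And>k x. k \<in> ?J \<Longrightarrow> tamari_le (lcut k s) x \<Longrightarrow> nleaves x = k + 1"
      proof -
        fix k x assume k: "k \<in> ?J" and le: "tamari_le (lcut k s) x"
        then have lt: "k < nleaves s" using J_lt[OF vs] by simp
        show "nleaves x = k + 1"
          using rtc_props[of "lcut k s" x] le valid_lcut(1)[OF vs] nleaves_lcut(1)[OF lt]
          unfolding tamari_le_def by auto
      qed
      note nl = this
      show "?P i \<inter> ?P j = {}"
      proof (rule ccontr)
        assume "?P i \<inter> ?P j \<noteq> {}"
        then obtain q where q: "q \<in> ?P i" "q \<in> ?P j" by blast
        have "tamari_le (lcut i s) (fst q)" "tamari_le (lcut j s) (fst q)" using q by (auto simp: mem_Times_iff)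
        then have "nleaves (fst q) = i + 1" "nleaves (fst q) = j + 1" using nl[OF i] nl[OF j] by blast+
        then show False using ne by simp
      qed
    qed
  qed
  also have "\<dots> = (\<Sum>j\<in>?J. Fb (lcut j s) a * Fb (rcut j s) b)"
  proof (intro sum.cong refl)
    fix j assume j: "j \<in> ?J"
    then have lt: "j < nleaves s" using J_lt[OF vs] by simp
    have "sum ?f (?P j) = (\<Sum>x\<in>{x. tamari_le (lcut j s) x}. \<Sum>y\<in>{y. tamari_le (rcut j s) y}. M x a * M y b)"
      by (subst sum.cartesian_product) (simp add: case_prod_beta)
    also have "\<dots> = (\<Sum>x\<in>{x. tamari_le (lcut j s) x}. M x a) * (\<Sum>y\<in>{y. tamari_le (rcut j s) y}. M y b)"
      by (simp add: sum_product)
    also have "\<dots> = Fb (lcut j s) a * Fb (rcut j s) b"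
      using M_def[OF valid_lcut(1)[OF vs]] M_def[OF valid_rcut(1)[OF vs lt]] by simp
    finally show "sum ?f (?P j) = Fb (lcut j s) a * Fb (rcut j s) b" .
  qed
  also have "\<dots> = DeltaF s (a, b)"
    unfolding DeltaF_def by (intro sum.cong refl) (auto simp: Fb_def)
  finally show ?thesis .
qed

lemma up_Leaf: "{t. tamari_le Leaf t} = {Leaf}"
proof -
  have "rot\<^sup>*\<^sup>* Leaf t \<Longrightarrow> t = Leaf" for t
    by (induction rule: rtranclp_induct) (auto elim: rot.cases)
  then show ?thesis unfolding tamari_le_def by auto
qed

lemma SG_eq:
  assumes vt: "valid t" and dp: "0 < deg t"
  shows "SG t = insert (t, Leaf) (insert (Leaf, t) ((\<lambda>i. (lcut i t, rcut i t)) ` GD t))"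
proof (intro set_eqI iffI)
  fix q assume "q \<in> SG t"
  then obtain x y where q: "q = (x, y)" "valid x" "valid y" "graft x y = t" by (auto simp: SG_def)
  have nl: "nleaves t = nleaves x + nleaves y - 1" using q graft_nleaves by auto
  have p: "1 \<le> nleaves x" "1 \<le> nleaves y" using q valid_nleaves by auto
  show "q \<in> insert (t, Leaf) (insert (Leaf, t) ((\<lambda>i. (lcut i t, rcut i t)) ` GD t))"
  proof (cases "nleaves x = 1")
    case True
    then have "x = Leaf" using valid_nleaves1 q by auto
    then show ?thesis using q graft_Leaf by auto
  next
    case False
    show ?thesis
    proof (cases "nleaves y = 1")
      case True
      then have "y = Leaf" using valid_nleaves1 q by auto
      then show ?thesis using q by auto
    next
      case False2: False
      have "2 \<le> nleaves x" "2 \<le> nleaves y" using False False2 p by auto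
      then have "1 \<le> deg x" "deg x \<le> deg t - 1" using nl unfolding deg_def by linarith+
      then have "deg x \<in> GD t" unfolding GD_def using q by blast
      moreover have "q = (lcut (deg x) t, rcut (deg x) t)" using L1[OF q(2,3)] q by auto
      ultimately show ?thesis by blast
    qed
  qed
next
  fix q assume q: "q \<in> insert (t, Leaf) (insert (Leaf, t) ((\<lambda>i. (lcut i t, rcut i t)) ` GD t))"
  show "q \<in> SG t"
  proof -
    { assume "q = (t, Leaf)" then have ?thesis using vt by (simp add: SG_def) }
    moreover
    { assume "q = (Leaf, t)" then have ?thesis using vt graft_Leaf by (simp add: SG_def) }
    moreover
    { assume "q \<in> (\<lambda>i. (lcut i t, rcut i t)) ` GD t"
      then obtain i where i: "i \<in> GD t" "q = (lcut i t, rcut i t)" by auto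
      then obtain x y where xy: "valid x" "valid y" "t = graft x y" "deg x = i"
        unfolding GD_def by auto
      then have "q = (x, y)" using L1[OF xy(1,2)] i by auto
      then have ?thesis using xy by (simp add: SG_def) }
    ultimately show ?thesis using q by blast
  qed
qed

theorem mainTheorem18:
  fixes M :: "ptree \<Rightarrow> ptree \<Rightarrow> 'a::comm_ring_1"
  assumes M_def: "\<And>s u. valid s \<Longrightarrow> Fb s u = (\<Sum>t\<in>{t. tamari_le s t}. M t u)"
    and "valid t" and "0 < deg t"
  shows "Delta_plus (M t) = (\<lambda>p. \<Sum>i\<in>GD t. tensor (M (lcut i t)) (M (rcut i t)) p)"
proof
  fix p :: "ptree \<times> ptree"
  obtain a b where p: "p = (a, b)" by fastforce
  let ?G = "\<lambda>t. Delta (M t) (a, b) - (\<Sum>q\<in>SG t. M (fst q) a * M (snd q) b)"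
  have "?G t = 0"
  proof (rule uniq[OF _ assms(2)])
    fix s assume vs: "valid s"
    show "(\<Sum>t\<in>{t. tamari_le s t}. ?G t) = 0"
      by (simp add: sum_subtractf stepA[OF M_def vs] stepB[OF M_def vs])
  qed
  then have D: "Delta (M t) (a, b) = (\<Sum>q\<in>SG t. M (fst q) a * M (snd q) b)" by simp
  have MLeaf: "M Leaf u = Fb Leaf u" for u using M_def[of Leaf u] by (simp add: up_Leaf)
  have tL: "t \<noteq> Leaf" using assms(3) by (auto simp: deg_def)
  have nlt: "1 \<le> nleaves t" using valid_nleaves assms(2) by auto
  have gd: "\<And>i. i \<in> GD t \<Longrightarrow> 1 \<le> i \<and> i \<le> deg t - 1" unfolding GD_def by auto
  have nlc: "\<And>i. i \<in> GD t \<Longrightarrow> nleaves (lcut i t) = i + 1"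
  proof -
    fix i assume "i \<in> GD t"
    then have "1 \<le> i \<and> i \<le> deg t - 1" using gd by blast
    then have "i < nleaves t" using nlt unfolding deg_def by linarith
    then show "nleaves (lcut i t) = i + 1" by (rule nleaves_lcut(1))
  qed
  have n1: "(t, Leaf) \<notin> insert (Leaf, t) ((\<lambda>i. (lcut i t, rcut i t)) ` GD t)"
  proof
    assume "(t, Leaf) \<in> insert (Leaf, t) ((\<lambda>i. (lcut i t, rcut i t)) ` GD t)"
    then obtain i where "i \<in> GD t" "lcut i t = t" using tL by auto
    then have "nleaves t = i + 1" "1 \<le> i \<and> i \<le> deg t - 1" using nlc[of i] gd[of i] by auto
    then show False unfolding deg_def by linarith
  qed
  have n2: "(Leaf, t) \<notin> ((\<lambda>i. (lcut i t, rcut i t)) ` GD t)"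
  proof
    assume "(Leaf, t) \<in> ((\<lambda>i. (lcut i t, rcut i t)) ` GD t)"
    then obtain i where "i \<in> GD t" "lcut i t = Leaf" by auto
    then show False using nlc[of i] gd[of i] by simp
  qed
  have inj: "inj_on (\<lambda>i. (lcut i t, rcut i t)) (GD t)"
    by (rule inj_onI) (metis (no_types, lifting) add_right_cancel nlc prod.inject)
  have fin: "finite (GD t)" unfolding GD_def by simp
  have "Delta (M t) (a, b) = M t a * M Leaf b + M Leaf a * M t b
      + (\<Sum>i\<in>GD t. M (lcut i t) a * M (rcut i t) b)"
    unfolding D SG_eq[OF assms(2,3)] using n1 n2 fin inj
    by (simp add: sum.reindex add.assoc)
  then show "Delta_plus (M t) p = (\<Sum>i\<in>GD t. tensor (M (lcut i t)) (M (rcut i t)) p)"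
    unfolding p Delta_plus_def tensor_def by (simp add: MLeaf)
qed

end
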